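(* Let $\|\cdot\|$ be a norm on $\mathbb{R}^d$ and $\Phi$ a mirror map whose Bregman divergence satisfies $\frac{m}{2}\|x-y\|^2\le D_\Phi(x,y)\le\frac{M}{2}\|x-y\|^2$ for all $x,y\in\mathbb{R}^d$ and some positive constants $m,M$; let $\kappa=M/m$. For every $\alpha>2\sqrt{\kappa-1}$ there exists a choice of $\beta$ such that Primal Online Balanced Descent (with norm $\|\cdot\|$ and mirror map $\Phi$) has competitive ratio at most $3+O(1/\alpha)$ for SOCO with switching cost $\|\cdot\|$ when all cost functions are locally $\alpha$-polyhedral.
   Context: SOCO: a convex decision set $\mathcal{X}\subseteq\mathbb{R}^d$, a norm $\|\cdot\|$ (switching cost), a starting point $x_0$, and non-negative convex cost functions $f_1,\dots,f_T$ ($f_t=+\infty$ outside $\mathcal{X}$). At round $t$ the algorithm observes $f_t$, then chooses $x_t\in\mathcal{X}$, paying $f_t(x_t)+\|x_t-x_{t-1}\|$. $\mathrm{cost}(ALG)=\sum_t f_t(x_t)+\|x_t-x_{t-1}\|$; $\mathrm{cost}(OPT)$ is the minimum of the same expression over all $(x_1,\dots,x_T)\in\mathcal{X}^T$ chosen with full knowledge. An algorithm is $C$-competitive if $\mathrm{cost}(ALG)\le C\,\mathrm{cost}(OPT)$ for all cost sequences. $D_\Phi(x,y)=\Phi(x)-\Phi(y)-\nabla\Phi(y)^T(x-y)$; $\Pi^\Phi_K(x)=\arg\min_{y\in K}D_\Phi(y,x)$. A function $f_t$ with minimizer $v_t$ is locally $\alpha$-polyhedral w.r.t. $\|\cdot\|$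 if there is $\epsilon>0$ with $f_t(x)-f_t(v_t)\ge\alpha\|x-v_t\|$ for all $x\in\mathcal{X}$ with $\|x-v_t\|\le\epsilon$. Primal Online Balanced Descent with parameter $\beta>0$: for $t=1,\dots,T$: observe $f_t$, let $v_t=\arg\min_x f_t(x)$; if $\|x_{t-1}-v_t\|<\beta f_t(v_t)$ set $x_t=v_t$; otherwise, with $K^l_t=\{x:f_t(x)\le l\}$ and $x(l)=\Pi^\Phi_{K^l_t}(x_{t-1})$, increase $l$ until $\|x(l)-x_{t-1}\|=\beta l$ and set $x_t=x(l)$. *)

theory Defs
  imports "HOL-Analysis.Analysis" "HOL-Library.Landau_Symbols"
begin

definition is_norm :: "('a::real_vector \<Rightarrow> real) \<Rightarrow> bool" where
  "is_norm N \<longleftrightarrow> (\<forall>x. N x = 0 \<longleftrightarrow> x = 0) \<and> (\<forall>c x. N (c *\<^sub>R x) = \<bar>c\<bar> * N x)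
     \<and> (\<forall>x y. N (x + y) \<le> N x + N y)"

text \<open>Bregman divergence D_Phi(x,y) = Phi x - Phi y - gradPhi(y)^T (x - y), where the
  gradient term is given by the Frechet derivative Phi' y (a linear map).\<close>
definition bregman :: "('a::real_vector \<Rightarrow> real) \<Rightarrow> ('a \<Rightarrow> 'a \<Rightarrow> real) \<Rightarrow> 'a \<Rightarrow> 'a \<Rightarrow> real" where
  "bregman \<Phi> \<Phi>' x y = \<Phi> x - \<Phi> y - \<Phi>' y (x - y)"

definition is_bregman_proj :: "('a::real_vector \<Rightarrow> real) \<Rightarrow> ('a \<Rightarrow> 'a \<Rightarrow> real) \<Rightarrow> 'a set \<Rightarrow> 'a \<Rightarrow> 'a \<Rightarrow> bool" where
  "is_bregman_proj \<Phi> \<Phi>' K x p \<longleftrightarrow> p \<in> K \<and> (\<forall>y\<in>K. bregman \<Phi> \<Phi>' p x \<le> bregman \<Phi> \<Phi>' y x)"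

text \<open>v minimises f over the decision set X (f is +infinity outside X).\<close>
definition is_minimizer :: "'a set \<Rightarrow> ('a \<Rightarrow> real) \<Rightarrow> 'a \<Rightarrow> bool" where
  "is_minimizer X f v \<longleftrightarrow> v \<in> X \<and> (\<forall>y\<in>X. f v \<le> f y)"

definition locally_polyhedral :: "('a::real_vector \<Rightarrow> real) \<Rightarrow> 'a set \<Rightarrow> real \<Rightarrow> ('a \<Rightarrow> real) \<Rightarrow> bool" where
  "locally_polyhedral N X \<alpha> f \<longleftrightarrow> (\<exists>v. is_minimizer X f v \<and>
     (\<exists>\<epsilon>>0. \<forall>x\<in>X. N (x - v) \<le> \<epsilon> \<longrightarrow> f x - f v \<ge> \<alpha> * N (x - v)))"

definition sublevel :: "'a set \<Rightarrow> ('a \<Rightarrow> real) \<Rightarrow> real \<Rightarrow> 'a set" where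
  "sublevel X f l = {x\<in>X. f x \<le> l}"

text \<open>One step of Primal Online Balanced Descent: from x_{t-1} = xp, having observed f,
  the algorithm may move to xn.\<close>
definition pobd_step ::
  "('a::real_vector \<Rightarrow> real) \<Rightarrow> ('a \<Rightarrow> real) \<Rightarrow> ('a \<Rightarrow> 'a \<Rightarrow> real) \<Rightarrow> real \<Rightarrow> 'a set
     \<Rightarrow> ('a \<Rightarrow> real) \<Rightarrow> 'a \<Rightarrow> 'a \<Rightarrow> bool" where
  "pobd_step N \<Phi> \<Phi>' \<beta> X f xp xn \<longleftrightarrow> (\<exists>v. is_minimizer X f v \<and>
     (if N (xp - v) < \<beta> * f v then xn = v
      else (\<exists>l. is_bregman_proj \<Phi> \<Phi>' (sublevel X f l) xp xn \<and> N (xn - xp) = \<beta> * l \<and>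
              (\<forall>l' < l. \<forall>p. is_bregman_proj \<Phi> \<Phi>' (sublevel X f l') xp p \<longrightarrow>
                   N (p - xp) \<noteq> \<beta> * l'))))"

definition soco_cost :: "('a::real_vector \<Rightarrow> real) \<Rightarrow> (nat \<Rightarrow> 'a \<Rightarrow> real) \<Rightarrow> nat \<Rightarrow> (nat \<Rightarrow> 'a) \<Rightarrow> real" where
  "soco_cost N f T x = (\<Sum>t=1..T. f t (x t) + N (x t - x (t - 1)))"

definition soco_opt :: "('a::real_vector \<Rightarrow> real) \<Rightarrow> 'a set \<Rightarrow> 'a \<Rightarrow> (nat \<Rightarrow> 'a \<Rightarrow> real) \<Rightarrow> nat \<Rightarrow> real" where
  "soco_opt N X x0 f T = Inf {soco_cost N f T y | y. y 0 = x0 \<and> (\<forall>t\<in>{1..T}. y t \<in> X)}"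

definition pobd_competitive ::
  "('a::real_vector \<Rightarrow> real) \<Rightarrow> ('a \<Rightarrow> real) \<Rightarrow> ('a \<Rightarrow> 'a \<Rightarrow> real) \<Rightarrow> real \<Rightarrow> real \<Rightarrow> real \<Rightarrow> bool" where
  "pobd_competitive N \<Phi> \<Phi>' \<alpha> \<beta> C \<longleftrightarrow>
     (\<forall>X x0 T f x. convex X \<longrightarrow>
        (\<forall>t\<in>{1..T}. convex_on X (f t) \<and> (\<forall>y\<in>X. 0 \<le> f t y) \<and> locally_polyhedral N X \<alpha> (f t)) \<longrightarrow>
        x 0 = x0 \<longrightarrow>
        (\<forall>t\<in>{1..T}. pobd_step N \<Phi> \<Phi>' \<beta> X (f t) (x (t - 1)) (x t)) \<longrightarrow>
        soco_cost N f T x \<le> C * soco_opt N X x0 f T)"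

end

theory Submission
  imports Defs "HOL-Real_Asymp.Real_Asymp"
begin

lemma nrm_zero: "is_norm N \<Longrightarrow> N 0 = 0"
  by (simp add: is_norm_def)

lemma nrm_neg: "is_norm N \<Longrightarrow> N (- x) = N x"
proof -
  assume h: "is_norm N"
  have "N ((-1) *\<^sub>R x) = \<bar>-1\<bar> * N x" using h unfolding is_norm_def by blast
  then show ?thesis by simp
qed

lemma nrm_nonneg: "is_norm N \<Longrightarrow> 0 \<le> N x"
proof -
  assume h: "is_norm N"
  have "N (x + - x) \<le> N x + N (- x)" using h unfolding is_norm_def by blast
  then show ?thesis using nrm_zero[OF h] nrm_neg[OF h, of x] by simp
qed

lemma nrm_sym: "is_norm N \<Longrightarrow> N (x - y) = N (y - x)"
  using nrm_neg[of N "x - y"] by simp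

lemma nrm_tri: "is_norm N \<Longrightarrow> N (x - z) \<le> N (x - y) + N (y - z)"
proof -
  assume h: "is_norm N"
  have "N ((x - y) + (y - z)) \<le> N (x - y) + N (y - z)" using h unfolding is_norm_def by blast
  then show ?thesis by simp
qed

lemma nrm_scale: "is_norm N \<Longrightarrow> N (c *\<^sub>R x) = \<bar>c\<bar> * N x"
  unfolding is_norm_def by blast

lemma glob_poly:
  assumes N: "is_norm N" and cX: "convex X" and cf: "convex_on X f" and vX: "v \<in> X"
    and e: "\<epsilon> > 0" and loc: "\<forall>x\<in>X. N (x - v) \<le> \<epsilon> \<longrightarrow> f x - f v \<ge> \<alpha> * N (x - v)"
    and zX: "z \<in> X"
  shows "\<alpha> * N (z - v) \<le> f z - f v"
proof (cases "N (z - v) \<le> \<epsilon>")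
  case True then show ?thesis using loc zX by auto
next
  case False
  define d where "d = N (z - v)"
  have dpos: "d > \<epsilon>" using False d_def by simp
  define t where "t = \<epsilon> / d"
  have t0: "0 < t" "t < 1" using dpos e by (auto simp: t_def)
  define w where "w = (1 - t) *\<^sub>R v + t *\<^sub>R z"
  have wX: "w \<in> X" using cX vX zX t0 unfolding w_def by (simp add: convexD)
  have "w - v = t *\<^sub>R (z - v)" unfolding w_def by (simp add: algebra_simps)
  then have "N (w - v) = t * d" using nrm_scale[OF N, of t "z - v"] t0 d_def by simp
  also have "\<dots> = \<epsilon>" using dpos e by (simp add: t_def)
  finally have Nw: "N (w - v) = \<epsilon>" .
  have "\<alpha> * \<epsilon> \<le> f w - f v" using loc wX Nw by auto
  moreover have "f w \<le> (1 - t) * f v + t * f z"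
    unfolding w_def using convex_onD[OF cf, of t v z] t0 vX zX by simp
  ultimately have "\<alpha> * \<epsilon> \<le> t * (f z - f v)" by (simp add: algebra_simps)
  moreover have "\<alpha> * \<epsilon> = t * (\<alpha> * d)" using dpos e by (simp add: t_def)
  ultimately have "t * (\<alpha> * d) \<le> t * (f z - f v)" by simp
  then show ?thesis using t0 d_def by (simp add: mult_le_cancel_left)
qed

lemma step_bound:
  assumes N: "is_norm N" and cX: "convex X" and cf: "convex_on X f"
    and nn: "\<forall>y\<in>X. 0 \<le> f y" and poly: "locally_polyhedral N X \<alpha> f"
    and ap: "\<alpha> > 0" and a_def: "a = 1 / \<alpha>"
    and st: "pobd_step N \<Phi> \<Phi>' (1/2 + 4 * a) X f p x" and yX: "y \<in> X"
  shows "x \<in> X \<and> f x + N (x - p) + (3 + 8 * a) * N (x - y) - (3 + 8 * a) * N (p - y)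
           \<le> (3 + 20 * a + 32 * a\<^sup>2) * f y"
proof -
  have a0: "a > 0" using ap a_def by simp
  have aal: "a * \<alpha> = 1" using ap a_def by simp
  obtain v0 \<epsilon> where min0: "is_minimizer X f v0" and e: "\<epsilon> > 0"
    and loc: "\<forall>x\<in>X. N (x - v0) \<le> \<epsilon> \<longrightarrow> f x - f v0 \<ge> \<alpha> * N (x - v0)"
    using poly unfolding locally_polyhedral_def by blast
  have v0X: "v0 \<in> X" using min0 by (simp add: is_minimizer_def)
  have glob: "\<And>z. z \<in> X \<Longrightarrow> N (z - v0) \<le> a * (f z - f v0)"
  proof -
    fix z assume zX: "z \<in> X"
    have "\<alpha> * N (z - v0) \<le> f z - f v0" by (rule glob_poly[OF N cX cf v0X e loc zX])
    then have "a * (\<alpha> * N (z - v0)) \<le> a * (f z - f v0)" using a0 by (simp add: mult_left_mono)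
    then show "N (z - v0) \<le> a * (f z - f v0)" using aal by (simp add: mult.assoc[symmetric])
  qed
  have fv0: "0 \<le> f v0" using nn v0X by blast
  have fy: "f v0 \<le> f y" using min0 yX by (simp add: is_minimizer_def)
  define \<beta> where "\<beta> = 1/2 + 4 * a"
  define c where "c = 3 + 8 * a"
  define C where "C = 3 + 20 * a + 32 * a\<^sup>2"
  have C0: "0 \<le> C" using a0 by (simp add: C_def)
  obtain v where minv: "is_minimizer X f v" and cs:
    "(if N (p - v) < \<beta> * f v then x = v
      else (\<exists>l. is_bregman_proj \<Phi> \<Phi>' (sublevel X f l) p x \<and> N (x - p) = \<beta> * l \<and>
              (\<forall>l' < l. \<forall>q. is_bregman_proj \<Phi> \<Phi>' (sublevel X f l') p q \<longrightarrow>
                   N (q - p) \<noteq> \<beta> * l')))"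
    using st unfolding pobd_step_def \<beta>_def by blast
  have vv0: "v = v0"
  proof -
    have vX: "v \<in> X" using minv by (simp add: is_minimizer_def)
    have "f v = f v0" using minv min0 vX v0X by (force simp: is_minimizer_def)
    then have "N (v - v0) \<le> 0" using glob[OF vX] by simp
    then have "N (v - v0) = 0" using nrm_nonneg[OF N, of "v - v0"] by simp
    then show ?thesis using N unfolding is_norm_def by simp
  qed
  have Nyv: "N (v0 - y) \<le> a * (f y - f v0)" using glob[OF yX] nrm_sym[OF N, of v0 y] by simp
  have cpos: "c > 0" using a0 by (simp add: c_def)
  have "x \<in> X \<and> f x + N (x - p) + c * N (x - y) - c * N (p - y) \<le> C * f y"
  proof (cases "N (p - v) < \<beta> * f v")
    case True
    then have xv: "x = v0" and lt: "N (p - v0) < \<beta> * f v0" using cs vv0 by auto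
    have "N (v0 - p) = N (p - v0)" by (rule nrm_sym[OF N])
    have np: "0 \<le> c * N (p - y)" using nrm_nonneg[OF N, of "p - y"] cpos by simp
    have "c * N (v0 - y) \<le> c * (a * (f y - f v0))" using Nyv cpos by (simp add: mult_left_mono)
    moreover have "c * (a * (f y - f v0)) \<le> c * a * f y" using cpos a0 fv0
      by (simp add: algebra_simps)
    moreover have "(1 + \<beta>) * f v0 \<le> (1 + \<beta>) * f y" using fy a0 by (simp add: \<beta>_def mult_left_mono)
    moreover have "(1 + \<beta>) * f y + c * a * f y \<le> C * f y"
    proof -
      have "(1 + \<beta>) + c * a \<le> C" using a0 by (simp add: \<beta>_def c_def C_def algebra_simps power2_eq_square)
      then show ?thesis using fv0 fy by (metis distrib_right mult_right_mono order_trans)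
    qed
    ultimately show ?thesis using xv v0X lt np \<open>N (v0 - p) = N (p - v0)\<close>
      by (simp add: algebra_simps)
  next
    case False
    then obtain l where pr: "is_bregman_proj \<Phi> \<Phi>' (sublevel X f l) p x"
      and dl: "N (x - p) = \<beta> * l" using cs by auto
    have xX: "x \<in> X" and fxl: "f x \<le> l" using pr by (auto simp: is_bregman_proj_def sublevel_def)
    have tr: "N (x - y) \<le> N (x - p) + N (p - y)" by (rule nrm_tri[OF N])
    show ?thesis
    proof (cases "f y > l")
      case True
      have "c * N (x - y) \<le> c * (N (x - p) + N (p - y))" using tr cpos by (simp add: mult_left_mono)
      then have "f x + N (x - p) + c * N (x - y) - c * N (p - y) \<le> (1 + \<beta> + c * \<beta>) * l"
        using fxl dl by (simp add: algebra_simps)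
      also have "(1 + \<beta> + c * \<beta>) = C" by (simp add: \<beta>_def c_def C_def algebra_simps power2_eq_square)
      also have "C * l \<le> C * f y" using True C0 by (simp add: mult_left_mono)
      finally show ?thesis using xX by simp
    next
      case False
      have s1: "N (x - y) \<le> N (x - v0) + N (v0 - y)" by (rule nrm_tri[OF N])
      have s2: "N (x - v0) \<le> a * (f x - f v0)" using glob[OF xX] .
      have "a * (f x - f v0) + a * (f y - f v0) \<le> a * (2 * l)"
      proof -
        have "f x - f v0 + (f y - f v0) \<le> 2 * l" using fxl False fv0 by simp
        then have "a * (f x - f v0 + (f y - f v0)) \<le> a * (2 * l)" using a0 by (simp add: mult_left_mono)
        then show ?thesis by (simp add: algebra_simps)
      qed
      then have s: "N (x - y) \<le> 2 * a * l" using s1 s2 Nyv by simp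
      have r: "N (x - p) \<le> N (x - y) + N (y - p)" by (rule nrm_tri[OF N])
      have "N (y - p) = N (p - y)" by (rule nrm_sym[OF N])
      have "f x + N (x - p) + c * N (x - y) - c * N (p - y)
              \<le> l + \<beta> * l + c * N (x - y) - c * (\<beta> * l - N (x - y))"
        using r dl fxl cpos \<open>N (y - p) = N (p - y)\<close>
        by (smt (verit) mult_left_mono)
      also have "\<dots> = (1 + \<beta> - c * \<beta>) * l + 2 * c * N (x - y)" by (simp add: algebra_simps)
      also have "\<dots> \<le> (1 + \<beta> - c * \<beta>) * l + 2 * c * (2 * a * l)" using s cpos by simp
      also have "\<dots> = 0" by (simp add: \<beta>_def c_def algebra_simps power2_eq_square)
      also have "0 \<le> C * f y" using C0 nn yX by simp
      finally show ?thesis using xX by simp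
    qed
  qed
  then show ?thesis by (simp add: c_def C_def)
qed

lemma run_bound:
  assumes N: "is_norm N" and cX: "convex X" and ap: "\<alpha> > 0" and a_def: "a = 1 / \<alpha>"
    and hyps: "\<forall>t\<in>{1..T}. convex_on X (f t) \<and> (\<forall>y\<in>X. 0 \<le> f t y) \<and> locally_polyhedral N X \<alpha> (f t)"
    and steps: "\<forall>t\<in>{1..T}. pobd_step N \<Phi> \<Phi>' (1/2 + 4 * a) X (f t) (x (t - 1)) (x t)"
    and y0: "y 0 = x 0" and yX: "\<forall>t\<in>{1..T}. y t \<in> X"
  shows "(\<forall>t\<in>{1..T}. x t \<in> X) \<and> soco_cost N f T x + (3 + 8 * a) * N (x T - y T)
           \<le> (3 + 20 * a + 32 * a\<^sup>2) * soco_cost N f T y"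
  using hyps steps yX
proof (induction T)
  case 0
  then show ?case using y0 nrm_zero[OF N] by (simp add: soco_cost_def)
next
  case (Suc T)
  have a0: "a > 0" using ap a_def by simp
  have IH: "(\<forall>t\<in>{1..T}. x t \<in> X) \<and> soco_cost N f T x + (3 + 8 * a) * N (x T - y T)
           \<le> (3 + 20 * a + 32 * a\<^sup>2) * soco_cost N f T y"
    using Suc by auto
  have h: "convex_on X (f (Suc T)) \<and> (\<forall>y\<in>X. 0 \<le> f (Suc T) y) \<and> locally_polyhedral N X \<alpha> (f (Suc T))"
    using Suc.prems(1) by auto
  have st: "pobd_step N \<Phi> \<Phi>' (1/2 + 4 * a) X (f (Suc T)) (x T) (x (Suc T))"
    using Suc.prems(2) by (metis atLeastAtMost_iff diff_Suc_1 le_add1 order_refl plus_1_eq_Suc)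
  have yS: "y (Suc T) \<in> X" using Suc.prems(3) by auto
  have sb: "x (Suc T) \<in> X \<and> f (Suc T) (x (Suc T)) + N (x (Suc T) - x T)
      + (3 + 8 * a) * N (x (Suc T) - y (Suc T)) - (3 + 8 * a) * N (x T - y (Suc T))
      \<le> (3 + 20 * a + 32 * a\<^sup>2) * f (Suc T) (y (Suc T))"
    using step_bound[OF N cX _ _ _ ap a_def st yS] h by blast
  have t1: "N (x T - y (Suc T)) \<le> N (x T - y T) + N (y T - y (Suc T))" by (rule nrm_tri[OF N])
  have t2: "N (y T - y (Suc T)) = N (y (Suc T) - y T)" by (rule nrm_sym[OF N])
  have m1: "(3 + 8 * a) * N (x T - y (Suc T)) \<le> (3 + 8 * a) * N (x T - y T) + (3 + 8 * a) * N (y (Suc T) - y T)"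
    using t1 t2 a0 by (metis distrib_left mult_left_mono less_eq_real_def add_pos_nonneg zero_less_numeral mult_nonneg_nonneg)
  have m2: "(3 + 8 * a) * N (y (Suc T) - y T) \<le> (3 + 20 * a + 32 * a\<^sup>2) * N (y (Suc T) - y T)"
    using nrm_nonneg[OF N, of "y (Suc T) - y T"] a0 by (intro mult_right_mono) auto
  have cs: "\<And>z. soco_cost N f (Suc T) z = soco_cost N f T z + (f (Suc T) (z (Suc T)) + N (z (Suc T) - z T))"
    by (simp add: soco_cost_def)
  have "(\<forall>t\<in>{1..Suc T}. x t \<in> X)" using IH sb by (auto simp: le_Suc_eq)
  moreover have "soco_cost N f (Suc T) x + (3 + 8 * a) * N (x (Suc T) - y (Suc T))
           \<le> (3 + 20 * a + 32 * a\<^sup>2) * soco_cost N f (Suc T) y"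
    unfolding cs using IH sb m1 m2 by (simp add: distrib_left) 
  ultimately show ?case by simp
qed

theorem theorem9:
  fixes N :: "real ^ 'd \<Rightarrow> real"
    and \<Phi> :: "real ^ 'd \<Rightarrow> real"
    and \<Phi>' :: "real ^ 'd \<Rightarrow> real ^ 'd \<Rightarrow> real"
    and m M :: real
  assumes "is_norm N"
    and "\<And>x. (\<Phi> has_derivative \<Phi>' x) (at x)"
    and "m > 0" and "M > 0"
    and "\<And>x y. m / 2 * (N (x - y))\<^sup>2 \<le> bregman \<Phi> \<Phi>' x y"
    and "\<And>x y. bregman \<Phi> \<Phi>' x y \<le> M / 2 * (N (x - y))\<^sup>2"
  shows "\<exists>g :: real \<Rightarrow> real.
           (\<lambda>\<alpha>. g \<alpha> - 3) \<in> O[at_top](\<lambda>\<alpha>. 1 / \<alpha>) \<and>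
           (\<forall>\<alpha> > 2 * sqrt (M / m - 1). \<exists>\<beta> > 0. pobd_competitive N \<Phi> \<Phi>' \<alpha> \<beta> (g \<alpha>))"
proof -
  note N = assms(1)
  define e :: "real ^ 'd" where "e = axis undefined 1"
  have "e \<noteq> 0" by (simp add: e_def axis_def vec_eq_iff)
  then have Ne: "N e > 0" using N nrm_nonneg[OF N, of e] unfolding is_norm_def by force
  have "m / 2 * (N (e - 0))\<^sup>2 \<le> M / 2 * (N (e - 0))\<^sup>2" using assms(5,6) by (meson order_trans)
  then have "m \<le> M" using Ne by (simp add: power2_eq_square)
  then have mM: "M / m - 1 \<ge> 0" using assms(3) by (simp add: field_simps)
  define g where "g = (\<lambda>\<alpha>::real. 3 + 20 * (1/\<alpha>) + 32 * (1/\<alpha>)\<^sup>2)"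
  have "(\<lambda>\<alpha>. g \<alpha> - 3) \<in> O[at_top](\<lambda>\<alpha>. 1 / \<alpha>)" unfolding g_def by real_asymp
  moreover have "\<forall>\<alpha> > 2 * sqrt (M / m - 1). \<exists>\<beta> > 0. pobd_competitive N \<Phi> \<Phi>' \<alpha> \<beta> (g \<alpha>)"
  proof (intro allI impI)
    fix \<alpha> :: real assume "\<alpha> > 2 * sqrt (M / m - 1)"
    then have ap: "\<alpha> > 0" using mM by (smt (verit) real_sqrt_ge_zero)
    define a where "a = 1 / \<alpha>"
    have a0: "a > 0" using ap by (simp add: a_def)
    have gC: "g \<alpha> = 3 + 20 * a + 32 * a\<^sup>2" by (simp add: g_def a_def)
    have Cp: "g \<alpha> > 0" using a0 gC zero_le_power2[of a] by linarith
    have "pobd_competitive N \<Phi> \<Phi>' \<alpha> (1/2 + 4 * a) (g \<alpha>)"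
      unfolding pobd_competitive_def
    proof (intro allI impI)
      fix X x0 and T :: nat and f :: "nat \<Rightarrow> real ^ 'd \<Rightarrow> real" and x :: "nat \<Rightarrow> real ^ 'd"
      assume cX: "convex (X :: (real ^ 'd) set)"
        and hyps: "\<forall>t\<in>{1..T}. convex_on X (f t) \<and> (\<forall>y\<in>X. 0 \<le> f t y) \<and> locally_polyhedral N X \<alpha> (f t)"
        and x0: "x 0 = x0"
        and steps: "\<forall>t\<in>{1..T}. pobd_step N \<Phi> \<Phi>' (1/2 + 4 * a) X (f t) (x (t - 1)) (x t)"
      define S where "S = {soco_cost N f T y | y. y 0 = x0 \<and> (\<forall>t\<in>{1..T}. y t \<in> X)}"
      have xX: "\<forall>t\<in>{1..T}. x t \<in> X"
      proof
        fix t assume t: "t \<in> {1..T}"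
        have h: "convex_on X (f t) \<and> (\<forall>y\<in>X. 0 \<le> f t y) \<and> locally_polyhedral N X \<alpha> (f t)"
          using hyps t by blast
        then obtain v where "is_minimizer X (f t) v" unfolding locally_polyhedral_def by blast
        then have vX: "v \<in> X" by (simp add: is_minimizer_def)
        show "x t \<in> X" using step_bound[OF N cX _ _ _ ap a_def _ vX] h steps t by blast
      qed
      have bnd: "\<And>s. s \<in> S \<Longrightarrow> soco_cost N f T x / g \<alpha> \<le> s"
      proof -
        fix s assume "s \<in> S"
        then obtain y where s: "s = soco_cost N f T y" and y0: "y 0 = x0" and yX: "\<forall>t\<in>{1..T}. y t \<in> X"
          unfolding S_def by blast
        have "soco_cost N f T x + (3 + 8 * a) * N (x T - y T) \<le> g \<alpha> * s"
          using run_bound[OF N cX ap a_def hyps steps _ yX] y0 x0 s gC by simp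
        moreover have "0 \<le> (3 + 8 * a) * N (x T - y T)" using a0 nrm_nonneg[OF N] by simp
        ultimately have "soco_cost N f T x \<le> g \<alpha> * s" by linarith
        then show "soco_cost N f T x / g \<alpha> \<le> s" using Cp by (simp add: field_simps)
      qed
      have "soco_cost N f T x \<in> S" unfolding S_def using x0 xX by blast
      then have "S \<noteq> {}" by blast
      then have "soco_cost N f T x / g \<alpha> \<le> Inf S" using bnd by (rule cInf_greatest)
      then show "soco_cost N f T x \<le> g \<alpha> * soco_opt N X x0 f T"
        unfolding soco_opt_def S_def[symmetric] using Cp by (simp add: field_simps)
    qed
    moreover have "1/2 + 4 * a > 0" using a0 by simp
    ultimately show "\<exists>\<beta> > 0. pobd_competitive N \<Phi> \<Phi>' \<alpha> \<beta> (g \<alpha>)" by blast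
  qed
  ultimately show ?thesis by blast
qed

end
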